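(* Let $\mu^\ast$ be an upper quasi-density on $\mathbb{H}$, let $X\subseteq Y\subseteq\mathbb{H}$ with $\mu^\ast(X)<\mu^\ast(Y)$, and let $\xi$ be a real number with $\mu^\ast(X)<\xi<\mu^\ast(Y)$. Then there exist sequences $(A_n)_{n\ge1}$, $(B_n)_{n\ge1}$ of subsets of $\mathbb{H}$ such that: (i) $X\subseteq A_1\subseteq A_2\subseteq\cdots\subseteq A_n\subseteq\cdots\subseteq B_n\subseteq\cdots\subseteq B_2\subseteq B_1\subseteq Y$; (ii) $\mu^\ast(A_n)<\xi\le\mu^\ast(B_n)$ for all $n\in\mathbb{N}^+$; (iii) for each $n\in\mathbb{N}^+$ there exist $h,k\in\mathbb{N}$ with $k\ge n$ and $B_n\setminus A_n\subseteq k\cdot\mathbb{H}+h$.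
   Context: $\mathbb{N}=\{0,1,2,\dots\}$, $\mathbb{N}^+=\{1,2,\dots\}$; $\mathbb{H}$ is one of $\mathbb{Z},\mathbb{N},\mathbb{N}^+$. For $X\subseteq\mathbb{H}$, $k\in\mathbb{N}^+$, $h\in\mathbb{N}$, $k\cdot X+h:=\{kx+h:x\in X\}$. An upper quasi-density on $\mathbb{H}$ is a function $\mu^\ast:\mathcal{P}(\mathbb{H})\to\mathbb{R}$ with $\mu^\ast(\mathbb{H})=1$, $\mu^\ast(X)\le1$ for all $X$, $\mu^\ast(X\cup Y)\le\mu^\ast(X)+\mu^\ast(Y)$ for all $X,Y$, and $\mu^\ast(k\cdot X+h)=\frac1k\mu^\ast(X)$ for all $X\subseteq\mathbb{H}$, $h,k\in\mathbb{N}^+$. *)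

theory Defs
  imports Main "HOL.Real"
begin

text \<open>The ambient set H is modelled as a subset of the integers: Z, N or N+.\<close>
definition ambient :: "int set \<Rightarrow> bool" where
  "ambient H \<longleftrightarrow> H = UNIV \<or> H = {0..} \<or> H = {1..}"

definition dilate_shift :: "int \<Rightarrow> int set \<Rightarrow> int \<Rightarrow> int set" where
  "dilate_shift k X h = (\<lambda>x. k * x + h) ` X"

definition upper_quasi_density :: "int set \<Rightarrow> (int set \<Rightarrow> real) \<Rightarrow> bool" where
  "upper_quasi_density H \<mu> \<longleftrightarrow>
     \<mu> H = 1 \<and>
     (\<forall>X. X \<subseteq> H \<longrightarrow> \<mu> X \<le> 1) \<and>
     (\<forall>X Y. X \<subseteq> H \<longrightarrow> Y \<subseteq> H \<longrightarrow> \<mu> (X \<union> Y) \<le> \<mu> X + \<mu> Y) \<and>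
     (\<forall>X h k. X \<subseteq> H \<longrightarrow> h \<ge> 1 \<longrightarrow> k \<ge> 1 \<longrightarrow>
        \<mu> (dilate_shift k X h) = \<mu> X / real_of_int k)"

end

theory Submission
  imports Defs
begin

lemma amb_up: "ambient H \<Longrightarrow> x \<in> H \<Longrightarrow> x \<le> y \<Longrightarrow> y \<in> H"
  unfolding ambient_def by auto

lemma amb_pos: "ambient H \<Longrightarrow> (1::int) \<le> y \<Longrightarrow> y \<in> H"
  unfolding ambient_def by auto

lemma amb_neg: "ambient H \<Longrightarrow> x \<in> H \<Longrightarrow> x < 0 \<Longrightarrow> y \<in> H"
  unfolding ambient_def by auto

lemma uqd_shift: "upper_quasi_density H \<mu> \<Longrightarrow> X \<subseteq> H \<Longrightarrow> h \<ge> 1 \<Longrightarrow> k \<ge> 1 \<Longrightarrow>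
   \<mu> (dilate_shift k X h) = \<mu> X / real_of_int k"
  unfolding upper_quasi_density_def by blast

lemma uqd_sub: "upper_quasi_density H \<mu> \<Longrightarrow> X \<subseteq> H \<Longrightarrow> Y \<subseteq> H \<Longrightarrow>
   \<mu> (X \<union> Y) \<le> \<mu> X + \<mu> Y"
  unfolding upper_quasi_density_def by blast

lemma uqd_empty:
  assumes "upper_quasi_density H \<mu>"
  shows "\<mu> {} = 0"
proof -
  have "dilate_shift 2 {} 1 = {}" by (simp add: dilate_shift_def)
  moreover have "\<mu> (dilate_shift 2 {} 1) = \<mu> {} / real_of_int 2"
    using uqd_shift[OF assms, of "{}" 1 2] by simp
  ultimately show ?thesis by simp
qed

lemma uqd_single:
  assumes a: "ambient H" and u: "upper_quasi_density H \<mu>" and "a \<in> H"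
  shows "\<mu> {a} = 0"
proof -
  have sh: "\<mu> (dilate_shift k X h) = \<mu> X / real_of_int k"
    if "X \<subseteq> H" "h \<ge> 1" "k \<ge> 1" for X h k
    using uqd_shift[OF u that] .
  have s1: "\<mu> {x+1} = \<mu> {x}" if "x \<in> H" for x
  proof -
    have "dilate_shift 1 {x} 1 = {x+1}" by (simp add: dilate_shift_def)
    with sh[of "{x}" 1 1] that show ?thesis by simp
  qed
  have sn: "\<mu> {x + int n} = \<mu> {x}" if "x \<in> H" for x n
  proof (induction n)
    case 0 then show ?case by simp
  next
    case (Suc n)
    have "x + int n \<in> H" using amb_up[OF a that] by simp
    then have "\<mu> {x + int n + 1} = \<mu> {x + int n}" by (rule s1)
    moreover have "x + int (Suc n) = x + int n + 1" by simp
    ultimately show ?case using Suc.IH by metis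
  qed
  have d: "\<mu> {2*x+2} = \<mu> {x} / 2" if "x \<in> H" for x
  proof -
    have "dilate_shift 2 {x} 2 = {2*x+2}" by (simp add: dilate_shift_def)
    with sh[of "{x}" 2 2] that show ?thesis by simp
  qed
  define b where "b = max a 0"
  have bH: "b \<in> H" using amb_up[OF a assms(3)] b_def by simp
  have "\<mu> {a + int (nat (b - a))} = \<mu> {a}" using sn assms(3) by blast
  then have ba: "\<mu> {b} = \<mu> {a}" using b_def by simp
  have "\<mu> {b + int (nat (b + 2))} = \<mu> {b}" using sn bH by blast
  then have "\<mu> {2*b+2} = \<mu> {b}" using b_def by (simp add: algebra_simps)
  with d[OF bH] have "\<mu> {b} = 0" by simp
  with ba show ?thesis by simp
qed

lemma chain_lemma:
  fixes \<mu> :: "int set \<Rightarrow> real"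
  shows "\<And>A B. A \<subseteq> B \<Longrightarrow> B - A \<subseteq> \<Union> (set Ds) \<Longrightarrow> \<mu> A < \<xi> \<Longrightarrow> \<xi> \<le> \<mu> B \<Longrightarrow>
    \<exists>A' B' D. D \<in> set Ds \<and> A \<subseteq> A' \<and> A' \<subseteq> B' \<and> B' \<subseteq> B \<and> B' - A' \<subseteq> D
      \<and> \<mu> A' < \<xi> \<and> \<xi> \<le> \<mu> B'"
proof (induction Ds)
  case Nil
  then have "B = A" by auto
  then show ?case using Nil by auto
next
  case (Cons D Ds)
  define C where "C = A \<union> (B \<inter> D)"
  show ?case
  proof (cases "\<xi> \<le> \<mu> C")
    case True
    then show ?thesis using Cons.prems unfolding C_def
      by (rule_tac x=A in exI, rule_tac x=C in exI, rule_tac x=D in exI) (auto simp: C_def)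
  next
    case False
    have "C \<subseteq> B" "B - C \<subseteq> \<Union> (set Ds)" using Cons.prems unfolding C_def by auto
    from Cons.IH[OF this] False Cons.prems obtain A' B' D' where
      "D' \<in> set Ds \<and> C \<subseteq> A' \<and> A' \<subseteq> B' \<and> B' \<subseteq> B \<and> B' - A' \<subseteq> D' \<and> \<mu> A' < \<xi> \<and> \<xi> \<le> \<mu> B'"
      by force
    then show ?thesis unfolding C_def by (rule_tac x=A' in exI, rule_tac x=B' in exI, rule_tac x=D' in exI) auto
  qed
qed


lemma step_lemma:
  assumes a: "ambient H" and u: "upper_quasi_density H \<mu>"
    and AB: "A \<subseteq> B" "B \<subseteq> H" "\<mu> A < \<xi>" "\<xi> \<le> \<mu> B" and K: "K \<ge> (1::nat)"
  shows "\<exists>A' B'. A \<subseteq> A' \<and> A' \<subseteq> B' \<and> B' \<subseteq> B \<and> \<mu> A' < \<xi> \<and> \<xi> \<le> \<mu> B' \<and>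
     (\<exists>h::nat. B' - A' \<subseteq> dilate_shift (int K) H (int h))"
proof -
  define R where "R r = {x \<in> H. x mod int K = r \<and> (x < 0 \<or> x \<ge> int K)}" for r
  define Ds where "Ds = map (\<lambda>r. R (int r)) [0..<K] @ map (\<lambda>i. {int i}) [0..<K]"
  have Rsub: "R (int r) \<subseteq> dilate_shift (int K) H (int r)" for r
  proof
    fix x assume "x \<in> R (int r)"
    then have xH: "x \<in> H" and xm: "x mod int K = int r" and xc: "x < 0 \<or> x \<ge> int K"
      unfolding R_def by auto
    have "x div int K \<in> H"
    proof (cases "x < 0")
      case True then show ?thesis using amb_neg[OF a xH] by blast
    next
      case False
      with xc have "x \<ge> int K" by simp
      then have "x div int K \<ge> 1" using K
        by (metis div_self int_one_le_iff_zero_less less_le_trans not_le of_nat_0_less_iff zdiv_mono1 zero_less_one)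
      then show ?thesis by (rule amb_pos[OF a])
    qed
    moreover have "x = int K * (x div int K) + int r" using xm by (metis div_mult_mod_eq add.commute mult.commute)
    ultimately show "x \<in> dilate_shift (int K) H (int r)" unfolding dilate_shift_def by blast
  qed
  have cover: "B - A \<subseteq> \<Union> (set Ds)"
  proof
    fix x assume "x \<in> B - A"
    then have xH: "x \<in> H" using AB by auto
    show "x \<in> \<Union> (set Ds)"
    proof (cases "0 \<le> x \<and> x < int K")
      case True
      then have "{x} \<in> set Ds" unfolding Ds_def
        by (auto intro!: image_eqI[where x="nat x"])
      then show ?thesis by blast
    next
      case False
      have "0 \<le> x mod int K" "x mod int K < int K" using K by auto
      then have "R (int (nat (x mod int K))) \<in> set Ds" unfolding Ds_def
        by (auto intro!: image_eqI[where x="nat (x mod int K)"])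
      moreover have "x \<in> R (int (nat (x mod int K)))" using False xH \<open>0 \<le> x mod int K\<close>
        unfolding R_def by auto
      ultimately show ?thesis by blast
    qed
  qed
  obtain A' B' D where D: "D \<in> set Ds" and P: "A \<subseteq> A'" "A' \<subseteq> B'" "B' \<subseteq> B" "B' - A' \<subseteq> D"
    "\<mu> A' < \<xi>" "\<xi> \<le> \<mu> B'"
    using chain_lemma[OF AB(1) cover AB(3) AB(4)] by blast
  from D have "(\<exists>r. D = R (int r)) \<or> (\<exists>i. D = {int i})" unfolding Ds_def by auto
  then show ?thesis
  proof
    assume "\<exists>r. D = R (int r)"
    then obtain r where "D = R (int r)" by blast
    then have "B' - A' \<subseteq> dilate_shift (int K) H (int r)" using P(4) Rsub by blast
    then show ?thesis using P by blast
  next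
    assume "\<exists>i. D = {int i}"
    then obtain i where Di: "D = {int i}" by blast
    have A'H: "A' \<subseteq> H" "B' \<subseteq> H" using P AB by auto
    show ?thesis
    proof (cases "B' - A' = {}")
      case True
      then have "B' = A'" using P by auto
      then show ?thesis using P by simp
    next
      case False
      then have eq: "B' - A' = {int i}" using P(4) Di by auto
      then have iH: "int i \<in> H" using A'H by auto
      have "B' = A' \<union> {int i}" using eq P(2) by auto
      then have "\<mu> B' \<le> \<mu> A' + \<mu> {int i}" using uqd_sub[OF u A'H(1), of "{int i}"] iH by simp
      also have "\<mu> {int i} = 0" by (rule uqd_single[OF a u iH])
      finally show ?thesis using P by simp
    qed
  qed
qed

theorem mainTheorem9:
  fixes H X Y :: "int set" and \<mu> :: "int set \<Rightarrow> real" and \<xi> :: real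
  assumes "ambient H"
    and "upper_quasi_density H \<mu>"
    and "X \<subseteq> Y" and "Y \<subseteq> H"
    and "\<mu> X < \<mu> Y"
    and "\<mu> X < \<xi>" and "\<xi> < \<mu> Y"
  shows "\<exists>A B :: nat \<Rightarrow> int set.
           X \<subseteq> A 1 \<and> B 1 \<subseteq> Y \<and>
           (\<forall>n\<ge>1. A n \<subseteq> A (n + 1) \<and> A n \<subseteq> B n \<and> B (n + 1) \<subseteq> B n) \<and>
           (\<forall>n\<ge>1. \<mu> (A n) < \<xi> \<and> \<xi> \<le> \<mu> (B n)) \<and>
           (\<forall>n\<ge>1. \<exists>h k :: nat. k \<ge> n \<and>
               B n - A n \<subseteq> dilate_shift (int k) H (int h))"
proof -
  define Q where "Q K p q \<longleftrightarrow> fst p \<subseteq> fst q \<and> fst q \<subseteq> snd q \<and> snd q \<subseteq> snd p \<and>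
      \<mu> (fst q) < \<xi> \<and> \<xi> \<le> \<mu> (snd q) \<and>
     (\<exists>h::nat. snd q - fst q \<subseteq> dilate_shift (int K) H (int h))" for K p q
  define I where "I p \<longleftrightarrow> fst p \<subseteq> snd p \<and> snd p \<subseteq> H \<and> \<mu> (fst p) < \<xi> \<and> \<xi> \<le> \<mu> (snd p)" for p
  have ex: "\<exists>q. Q K p q" if "I p" "K \<ge> 1" for K p
    using step_lemma[OF assms(1,2), of "fst p" "snd p" \<xi> K] that unfolding I_def Q_def by auto
  define f where "f K p = (SOME q. Q K p q)" for K p
  have fQ: "Q K p (f K p)" if "I p" "K \<ge> 1" for K p
    unfolding f_def using someI_ex[OF ex[OF that]] .
  define st where "st = rec_nat (X, Y) (\<lambda>m p. f (Suc m) p)"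
  have st0: "st 0 = (X, Y)" and stS: "st (Suc m) = f (Suc m) (st m)" for m
    unfolding st_def by simp_all
  have inv: "I (st m)" for m
  proof (induction m)
    case 0 then show ?case using assms unfolding I_def st0 by auto
  next
    case (Suc m)
    have "Q (Suc m) (st m) (st (Suc m))" unfolding stS by (rule fQ[OF Suc]) simp
    then show ?case using Suc unfolding Q_def I_def by auto
  qed
  have QS: "Q (Suc m) (st m) (st (Suc m))" for m
    unfolding stS by (rule fQ[OF inv]) simp
  show ?thesis
  proof (rule exI[of _ "\<lambda>n. fst (st n)"], rule exI[of _ "\<lambda>n. snd (st n)"], intro conjI allI impI)
    show "X \<subseteq> fst (st 1)" using QS[of 0] st0 unfolding Q_def by simp
    show "snd (st 1) \<subseteq> Y" using QS[of 0] st0 unfolding Q_def by simp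
    fix n :: nat assume n: "1 \<le> n"
    show "fst (st n) \<subseteq> fst (st (n + 1))" using QS[of n] unfolding Q_def by simp
    show "snd (st (n + 1)) \<subseteq> snd (st n)" using QS[of n] unfolding Q_def by simp
    show "fst (st n) \<subseteq> snd (st n)" "\<mu> (fst (st n)) < \<xi>" "\<xi> \<le> \<mu> (snd (st n))"
      using inv[of n] unfolding I_def by auto
    obtain m where m: "n = Suc m" using n by (cases n) auto
    obtain h :: nat where "snd (st n) - fst (st n) \<subseteq> dilate_shift (int n) H (int h)"
      using QS[of m] unfolding Q_def m by blast
    then show "\<exists>h k :: nat. k \<ge> n \<and> snd (st n) - fst (st n) \<subseteq> dilate_shift (int k) H (int h)"
      by (intro exI[of _ h] exI[of _ n]) simp
  qed
qed

end
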